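(* Every finite game $\Gamma$ whose players have CPT preferences has a mixed black-box strategy Nash equilibrium; in particular it has one $\tau=(\tau_1,\dots,\tau_n)$ in which each $\tau_i$ is a finitely supported probability measure on $B_i$.
   Context: A game $\Gamma=(N,(A_i),(x_i))$: players $N=\{1,\dots,n\}$, finite action sets $A_i$, payoffs $x_i:A\to\mathbb{R}$, $A=\prod_iA_i$, $A_{-i}=\prod_{j\neq i}A_j$. Each player $i$ has CPT preferences with CPT value functional $V_i$ on finite lotteries (determined by a reference point, a continuous strictly increasing value function vanishing at the reference point, and continuous strictly increasing probability weighting functions $w_i^\pm:[0,1]\to[0,1]$ fixing $0$ and $1$, via the standard rank-dependent CPT formula). $B_i=\Delta(A_i)$ is the set of black-box strategies; for a belief $\mu_{-i}\in\Delta(A_{-i})$ and $b_i\in B_i$, $\mu(b_i,\mu_{-i})[a]=b_i[a_i]\mu_{-i}[a_{-i}]$, and $\mathcal{B}_i(\mu_{-i})=\arg\max_{b_i\in B_i}V_i(\{(\mu(b_i,\mu_{-i})[a],x_i(a))\}_{a\in A})$. For $\sigma_j\in\Delta(A_j)$, $\mu_{-i}(\sigma_{-i})[a_{-i}]=\prod_{j\ne i}\sigma_j[a_j]$. A conjecture over player $i$'s black-box strategy is a Borel probability measure $\tau_i$ on $B_i$, inducing $\sigma_i(\tau_i)[a_i]=\mathbb{E}_{\tau_i}b_i[a_i]$. A profile $\tau$ is a mixed black-box strategy Nash equilibrium if for every $i$ and every $b_i\in\operatorname{supp}\tau_i$, $b_i\in\mathcal{B}_i(\mu_{-i}((\sigma_j(\tau_j))_{j\neq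 i}))$. *)

theory Defs
  imports "HOL-Analysis.Analysis" "HOL-Probability.Probability"
begin

definition lott_prob :: "'b set \<Rightarrow> ('b \<Rightarrow> real) \<Rightarrow> ('b \<Rightarrow> bool) \<Rightarrow> real" where
  "lott_prob I p P = (\<Sum>k\<in>{k\<in>I. P k}. p k)"

text \<open>Standard rank-dependent CPT value of the finite lottery
  {(p k, z k)}_{k in I}, with reference point r, value function v and
  probability weighting functions wp (gains) and wm (losses).\<close>
definition cpt_value ::
  "real \<Rightarrow> (real \<Rightarrow> real) \<Rightarrow> (real \<Rightarrow> real) \<Rightarrow> (real \<Rightarrow> real)
    \<Rightarrow> 'b set \<Rightarrow> ('b \<Rightarrow> real) \<Rightarrow> ('b \<Rightarrow> real) \<Rightarrow> real" where
  "cpt_value r v wp wm I p z =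
     (\<Sum>y\<in>{y\<in>z ` I. y > r}.
        v y * (wp (lott_prob I p (\<lambda>k. z k \<ge> y)) - wp (lott_prob I p (\<lambda>k. z k > y))))
   + (\<Sum>y\<in>{y\<in>z ` I. y < r}.
        v y * (wm (lott_prob I p (\<lambda>k. z k \<le> y)) - wm (lott_prob I p (\<lambda>k. z k < y))))"

definition cpt_prefs :: "real \<Rightarrow> (real \<Rightarrow> real) \<Rightarrow> (real \<Rightarrow> real) \<Rightarrow> (real \<Rightarrow> real) \<Rightarrow> bool" where
  "cpt_prefs r v wp wm \<longleftrightarrow>
     continuous_on UNIV v \<and> strict_mono v \<and> v r = 0 \<and>
     continuous_on {0..1} wp \<and> strict_mono_on {0..1} wp \<and> wp 0 = 0 \<and> wp 1 = 1 \<and>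
     continuous_on {0..1} wm \<and> strict_mono_on {0..1} wm \<and> wm 0 = 0 \<and> wm 1 = 1"

definition bb_simplex :: "'a set \<Rightarrow> ('a \<Rightarrow> real) set" where
  "bb_simplex S = {b. (\<forall>a. 0 \<le> b a) \<and> (\<forall>a. a \<notin> S \<longrightarrow> b a = 0) \<and> sum b S = 1}"

definition joint_prob :: "'n::finite \<Rightarrow> ('a \<Rightarrow> real) \<Rightarrow> ('n \<Rightarrow> 'a \<Rightarrow> real) \<Rightarrow> ('n \<Rightarrow> 'a) \<Rightarrow> real" where
  "joint_prob i b \<sigma> a = b (a i) * (\<Prod>j\<in>UNIV - {i}. \<sigma> j (a j))"

definition bb_value ::
  "('n::finite \<Rightarrow> 'a set) \<Rightarrow> ('n \<Rightarrow> ('n \<Rightarrow> 'a) \<Rightarrow> real) \<Rightarrow> ('n \<Rightarrow> real) \<Rightarrow> ('n \<Rightarrow> real \<Rightarrow> real)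
    \<Rightarrow> ('n \<Rightarrow> real \<Rightarrow> real) \<Rightarrow> ('n \<Rightarrow> real \<Rightarrow> real) \<Rightarrow> 'n \<Rightarrow> ('n \<Rightarrow> 'a \<Rightarrow> real) \<Rightarrow> ('a \<Rightarrow> real) \<Rightarrow> real" where
  "bb_value A x r v wp wm i \<sigma> b =
     cpt_value (r i) (v i) (wp i) (wm i) (PiE UNIV A) (joint_prob i b \<sigma>) (x i)"

definition bb_best_response ::
  "('n::finite \<Rightarrow> 'a set) \<Rightarrow> ('n \<Rightarrow> ('n \<Rightarrow> 'a) \<Rightarrow> real) \<Rightarrow> ('n \<Rightarrow> real) \<Rightarrow> ('n \<Rightarrow> real \<Rightarrow> real)
    \<Rightarrow> ('n \<Rightarrow> real \<Rightarrow> real) \<Rightarrow> ('n \<Rightarrow> real \<Rightarrow> real) \<Rightarrow> 'n \<Rightarrow> ('n \<Rightarrow> 'a \<Rightarrow> real) \<Rightarrow> ('a \<Rightarrow> real) \<Rightarrow> bool" where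
  "bb_best_response A x r v wp wm i \<sigma> b \<longleftrightarrow>
     b \<in> bb_simplex (A i) \<and>
     (\<forall>b'\<in>bb_simplex (A i). bb_value A x r v wp wm i \<sigma> b' \<le> bb_value A x r v wp wm i \<sigma> b)"

definition induced_mixed :: "('a \<Rightarrow> real) pmf \<Rightarrow> 'a \<Rightarrow> real" where
  "induced_mixed \<tau> a = measure_pmf.expectation \<tau> (\<lambda>b. b a)"

definition mixed_bb_nash ::
  "('n::finite \<Rightarrow> 'a set) \<Rightarrow> ('n \<Rightarrow> ('n \<Rightarrow> 'a) \<Rightarrow> real) \<Rightarrow> ('n \<Rightarrow> real) \<Rightarrow> ('n \<Rightarrow> real \<Rightarrow> real)
    \<Rightarrow> ('n \<Rightarrow> real \<Rightarrow> real) \<Rightarrow> ('n \<Rightarrow> real \<Rightarrow> real) \<Rightarrow> ('n \<Rightarrow> ('a \<Rightarrow> real) pmf) \<Rightarrow> bool" where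
  "mixed_bb_nash A x r v wp wm \<tau> \<longleftrightarrow>
     (\<forall>i. set_pmf (\<tau> i) \<subseteq> bb_simplex (A i)) \<and>
     (\<forall>i. \<forall>b\<in>set_pmf (\<tau> i).
        bb_best_response A x r v wp wm i (\<lambda>j. induced_mixed (\<tau> j)) b)"

end

theory Submission
  imports Defs "HOL-Library.Function_Algebras"
begin

lemma closed_box_fun:
  assumes "\<And>j. closed (R j)"
  shows "closed {z :: 'c \<Rightarrow> real. \<forall>j. z j \<in> R j}"
proof -
  have "{z :: 'c \<Rightarrow> real. \<forall>j. z j \<in> R j} = (\<Inter>j. (\<lambda>z. z j) -` R j)" by auto
  also have "closed \<dots>"
    by (intro closed_INT ballI closed_vimage assms continuous_on_product_coordinates)
  finally show ?thesis .
qed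

lemma compact_box_fun:
  assumes "\<And>j. compact (R j)"
  shows "compact {z :: 'c \<Rightarrow> real. \<forall>j. z j \<in> R j}"
proof -
  have "{z :: 'c \<Rightarrow> real. \<forall>j. z j \<in> R j} = PiE UNIV R" by (auto simp: PiE_def Pi_def extensional_def)
  moreover have "compactin (product_topology (\<lambda>i. euclidean) UNIV) (PiE UNIV R)"
    using assms by (auto simp: compactin_PiE)
  ultimately show ?thesis by (simp add: euclidean_product_topology compactin_euclidean_iff)
qed

lemma fip_nested:
  fixes D :: "real \<Rightarrow> 'b::topological_space set"
  assumes K: "compact K" and cl: "\<And>d. d > 0 \<Longrightarrow> closed (D d)"
    and sub: "\<And>d. d > 0 \<Longrightarrow> D d \<subseteq> K" and ne: "\<And>d. d > 0 \<Longrightarrow> D d \<noteq> {}"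
    and mono: "\<And>d d'. 0 < d \<Longrightarrow> d \<le> d' \<Longrightarrow> D d \<subseteq> D d'"
  shows "\<exists>z. \<forall>d>0. z \<in> D d"
proof -
  have "K \<inter> \<Inter>(D ` {0<..}) \<noteq> {}"
  proof (rule compact_imp_fip[OF K])
    show "\<And>T. T \<in> D ` {0<..} \<Longrightarrow> closed T" using cl by auto
    fix F' assume F': "finite F'" "F' \<subseteq> D ` {0<..}"
    then obtain G where G: "G \<subseteq> {0<..}" "finite G" "F' = D ` G"
      by (meson finite_subset_image)
    show "K \<inter> \<Inter> F' \<noteq> {}"
    proof (cases "G = {}")
      case True
      then show ?thesis using G sub[of 1] ne[of 1] by auto
    next
      case False
      define m where "m = Min G"
      have m: "m \<in> G" "\<And>g. g \<in> G \<Longrightarrow> m \<le> g" using G False by (auto simp: m_def)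
      have mp: "m > 0" using m G by auto
      have "D m \<subseteq> K \<inter> \<Inter> F'" using G(3) m mp sub mono by blast
      then show ?thesis using ne[OF mp] by blast
    qed
  qed
  then show ?thesis by auto
qed

definition cube :: "'c set \<Rightarrow> ('c \<Rightarrow> real) set" where
  "cube I = {z. \<forall>j. z j \<in> (if j \<in> I then {0..1} else {0})}"

lemma cube_iff: "z \<in> cube I \<longleftrightarrow> (\<forall>j\<in>I. 0 \<le> z j \<and> z j \<le> 1) \<and> (\<forall>j. j \<notin> I \<longrightarrow> z j = 0)"
  unfolding cube_def by (auto split: if_splits)

lemma compact_cube: "compact (cube I)"
  unfolding cube_def by (rule compact_box_fun) auto

lemma closed_cube: "closed (cube I)"
  unfolding cube_def by (rule closed_box_fun) auto

lemma cube_unif_cont: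
  fixes f :: "('c \<Rightarrow> real) \<Rightarrow> ('c \<Rightarrow> real)"
  assumes I: "finite I" and cf: "continuous_on (cube I) f" and e: "e > 0"
  shows "\<exists>d>0. \<forall>x\<in>cube I. \<forall>y\<in>cube I. (\<forall>j\<in>I. \<bar>x j - y j\<bar> < d) \<longrightarrow> (\<forall>j\<in>I. \<bar>f x j - f y j\<bar> < e)"
proof (rule ccontr)
  assume "\<not> ?thesis"
  then have bad: "\<And>d. d > 0 \<Longrightarrow> \<exists>x\<in>cube I. \<exists>y\<in>cube I. (\<forall>j\<in>I. \<bar>x j - y j\<bar> < d) \<and> (\<exists>j\<in>I. e \<le> \<bar>f x j - f y j\<bar>)"
    by (meson not_le)
  define C where "C = cube I \<times> cube I"
  define D where "D d = C \<inter> (\<Inter>j\<in>I. {p. \<bar>fst p j - snd p j\<bar> \<le> d}) \<inter> (\<Union>j\<in>I. C \<inter> (\<lambda>p. \<bar>f (fst p) j - f (snd p) j\<bar>) -` {e..})" for d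
  have Ccl: "closed C" unfolding C_def by (intro closed_Times closed_cube)
  have Ccp: "compact C" unfolding C_def by (intro compact_Times compact_cube)
  have cfj: "continuous_on (cube I) (\<lambda>z. f z j)" for j
    using cf by (rule continuous_on_product_then_coordinatewise)
  have cf1: "continuous_on C (\<lambda>p. f (fst p) j)" for j
    by (rule continuous_on_compose2[OF cfj[of j] continuous_on_fst]) (auto simp: C_def)
  have cf2: "continuous_on C (\<lambda>p. f (snd p) j)" for j
    by (rule continuous_on_compose2[OF cfj[of j] continuous_on_snd]) (auto simp: C_def)
  have cp: "continuous_on UNIV (\<lambda>p::('c\<Rightarrow>real)\<times>('c\<Rightarrow>real). \<bar>fst p j - snd p j\<bar>)" for j
    by (intro continuous_intros continuous_on_compose2[OF continuous_on_product_coordinates]) auto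
  obtain z where z: "\<And>d. d > 0 \<Longrightarrow> z \<in> D d"
  proof -
    have "\<exists>z. \<forall>d>0. z \<in> D d"
    proof (rule fip_nested[OF Ccp])
      fix d :: real assume d: "d > 0"
      have c1: "closed {p. \<bar>fst p j - snd p j\<bar> \<le> d}" for j :: 'c
        using closed_vimage[OF closed_atMost cp[of j], of d] by (simp add: vimage_def)
      have c2: "closed (C \<inter> (\<lambda>p. \<bar>f (fst p) j - f (snd p) j\<bar>) -` {e..})" for j :: 'c
        by (rule continuous_closed_preimage[OF _ Ccl closed_atLeast]) (intro continuous_intros cf1 cf2)
      show "closed (D d)" unfolding D_def
        by (intro closed_Int Ccl closed_INT closed_UN I ballI c1 c2)
      show "D d \<subseteq> C" unfolding D_def by auto
      from bad[OF d] obtain x y where xy: "x \<in> cube I" "y \<in> cube I" "\<forall>j\<in>I. \<bar>x j - y j\<bar> < d"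
         "\<exists>j\<in>I. e \<le> \<bar>f x j - f y j\<bar>" by blast
      have "(x, y) \<in> D d" using xy unfolding D_def C_def by (auto simp: less_imp_le)
      then show "D d \<noteq> {}" by auto
    next
      fix d d' :: real assume "0 < d" "d \<le> d'"
      then show "D d \<subseteq> D d'" unfolding D_def by (auto intro: order_trans)
    qed
    then show ?thesis using that by blast
  qed
  obtain x y where zxy: "z = (x, y)" by fastforce
  have xy: "x \<in> cube I" "y \<in> cube I" using z[of 1] zxy by (auto simp: D_def C_def)
  have "x j = y j" if "j \<in> I" for j
  proof (rule ccontr)
    assume "x j \<noteq> y j"
    then have "\<bar>x j - y j\<bar> > 0" by auto
    from z[OF half_gt_zero[OF this]] that zxy have "\<bar>x j - y j\<bar> \<le> \<bar>x j - y j\<bar> / 2" by (auto simp: D_def)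
    with \<open>\<bar>x j - y j\<bar> > 0\<close> show False by (smt (verit) field_sum_of_halves)
  qed
  moreover have "x j = y j" if "j \<notin> I" for j using xy that by (auto simp: cube_iff)
  ultimately have "x = y" by blast
  with z[of 1] zxy e show False by (auto simp: D_def)
qed

lemma cube_approx_fix:
  fixes f :: "('c \<Rightarrow> real) \<Rightarrow> ('c \<Rightarrow> real)"
  assumes I: "finite I" and cf: "continuous_on (cube I) f" and fC: "\<And>z. z \<in> cube I \<Longrightarrow> f z \<in> cube I"
    and eta: "\<eta> > 0"
  shows "\<exists>z\<in>cube I. \<forall>j\<in>I. \<bar>f z j - z j\<bar> \<le> \<eta>"
proof -
  obtain d where d: "d > 0" and dU: "\<And>x y. x \<in> cube I \<Longrightarrow> y \<in> cube I \<Longrightarrow> (\<forall>j\<in>I. \<bar>x j - y j\<bar> < d) \<Longrightarrow> (\<forall>j\<in>I. \<bar>f x j - f y j\<bar> < \<eta>/2)"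
    using cube_unif_cont[OF I cf, of "\<eta>/2"] eta by auto
  obtain p :: nat where p: "1/d + 2/\<eta> < real p" using reals_Archimedean2 by blast
  have pp: "real p > 0" using p d eta by (smt (verit) divide_pos_pos)
  then have p0: "0 < p" by simp
  have pd: "1 / real p < d"
  proof -
    have "1/d < real p" using p eta by (smt (verit) divide_pos_pos)
    then show ?thesis using d pp by (simp add: field_simps)
  qed
  have pe: "1 / real p \<le> \<eta>/2"
  proof -
    have "2/\<eta> < real p" using p d by (smt (verit) divide_pos_pos)
    then show ?thesis using eta pp by (simp add: field_simps)
  qed
  define n where "n = card I"
  obtain b where b: "bij_betw b {..<n} I"
    using ex_bij_betw_nat_finite[OF I] by (auto simp: n_def atLeast0LessThan)
  define b' where "b' = inv_into {..<n} b"
  have bI: "i < n \<Longrightarrow> b i \<in> I" for i using b by (auto simp: bij_betw_def)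
  have b'I: "j \<in> I \<Longrightarrow> b' j < n" for j using b unfolding b'_def bij_betw_def
    by (metis inv_into_into lessThan_iff)
  have bb': "j \<in> I \<Longrightarrow> b (b' j) = j" for j using b unfolding b'_def bij_betw_def
    by (simp add: f_inv_into_f)
  have b'b: "i < n \<Longrightarrow> b' (b i) = i" for i using b unfolding b'_def bij_betw_def
    by (simp add: inv_into_f_f)
  define P where "P x = (\<lambda>j. if j \<in> I then real (x (b' j)) / real p else 0)" for x :: "nat \<Rightarrow> nat"
  have Pb: "i < n \<Longrightarrow> P x (b i) = real (x i) / real p" for x i by (simp add: P_def bI b'b)
  have PC: "(\<forall>i<n. x i \<le> p) \<Longrightarrow> P x \<in> cube I" for x
    using pp b'I by (auto simp: cube_iff P_def field_simps)
  define label where "label z j = (if z j \<le> f z j \<and> z j \<noteq> 1 then 0 else (1::nat))" for z j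
  define lab where "lab x i = label (P x) (b i)" for x i
  obtain q where q: "\<forall>i<n. q i < p"
    and qrs: "\<forall>i<n. \<exists>r s. (\<forall>j<n. q j \<le> r j \<and> r j \<le> q j + 1) \<and> (\<forall>j<n. q j \<le> s j \<and> s j \<le> q j + 1) \<and> lab r i \<noteq> lab s i"
  proof (rule kuhn_lemma[OF p0])
    show "\<forall>x. (\<forall>i<n. x i \<le> p) \<longrightarrow> (\<forall>i<n. lab x i = 0 \<or> lab x i = 1)"
      by (auto simp: lab_def label_def)
    show "\<forall>x. (\<forall>i<n. x i \<le> p) \<longrightarrow> (\<forall>i<n. x i = 0 \<longrightarrow> lab x i = 0)"
    proof (intro allI impI)
      fix x i assume x: "\<forall>i<n. x i \<le> p" and i: "i < n" and xi: "x i = 0"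
      have "f (P x) \<in> cube I" using fC PC x by auto
      then have "0 \<le> f (P x) (b i)" using bI[OF i] by (auto simp: cube_iff)
      then show "lab x i = 0" using Pb[OF i] xi by (auto simp: lab_def label_def)
    qed
    show "\<forall>x. (\<forall>i<n. x i \<le> p) \<longrightarrow> (\<forall>i<n. x i = p \<longrightarrow> lab x i = 1)"
      using pp by (auto simp: lab_def label_def Pb)
  qed (auto)
  define z where "z = P q"
  have zC: "z \<in> cube I" unfolding z_def by (rule PC) (use q in auto)
  have "\<forall>j\<in>I. \<bar>f z j - z j\<bar> \<le> \<eta>"
  proof
    fix j assume j: "j \<in> I"
    define i where "i = b' j"
    have i: "i < n" "b i = j" using b'I[OF j] bb'[OF j] by (auto simp: i_def)
    obtain r s where r: "\<forall>j<n. q j \<le> r j \<and> r j \<le> q j + 1" and s: "\<forall>j<n. q j \<le> s j \<and> s j \<le> q j + 1"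
      and rs: "lab r i \<noteq> lab s i" using qrs i by blast
    have rC: "P r \<in> cube I" using r q by (intro PC) (metis Suc_eq_plus1 Suc_leI order_trans)
    have sC: "P s \<in> cube I" using s q by (intro PC) (metis Suc_eq_plus1 Suc_leI order_trans)
    have close: "\<forall>j\<in>I. \<bar>P t j - z j\<bar> < d \<and> z j \<le> P t j \<and> P t j \<le> z j + 1 / real p"
      if t: "\<forall>j<n. q j \<le> t j \<and> t j \<le> q j + 1" for t
    proof
      fix j' assume j': "j' \<in> I"
      have "q (b' j') \<le> t (b' j')" "t (b' j') \<le> q (b' j') + 1" using t b'I[OF j'] by auto
      then have "real (q (b' j')) \<le> real (t (b' j'))" "real (t (b' j')) \<le> real (q (b' j')) + 1" by linarith+
      then have "z j' \<le> P t j'" "P t j' \<le> z j' + 1 / real p"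
        using pp j' by (auto simp: z_def P_def divide_right_mono add_divide_distrib[symmetric])
      then show "\<bar>P t j' - z j'\<bar> < d \<and> z j' \<le> P t j' \<and> P t j' \<le> z j' + 1 / real p" using pd by auto
    qed
    have fr: "\<bar>f (P r) j - f z j\<bar> < \<eta>/2" using dU[OF rC zC] close[OF r] j by blast
    have fs: "\<bar>f (P s) j - f z j\<bar> < \<eta>/2" using dU[OF sC zC] close[OF s] j by blast
    have cr: "z j \<le> P r j" "P r j \<le> z j + 1 / real p" using close[OF r] j by auto
    have cs: "z j \<le> P s j" "P s j \<le> z j + 1 / real p" using close[OF s] j by auto
    have l0: "label (P t) j = 0 \<Longrightarrow> P t j \<le> f (P t) j" for t by (auto simp: label_def split: if_splits)
    have l1: "label (P t) j = 1 \<Longrightarrow> P t \<in> cube I \<Longrightarrow> f (P t) j \<le> P t j" for t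
    proof -
      assume "label (P t) j = 1" "P t \<in> cube I"
      moreover have "f (P t) j \<le> 1" using fC[OF \<open>P t \<in> cube I\<close>] j by (auto simp: cube_iff)
      ultimately show ?thesis by (auto simp: label_def split: if_splits)
    qed
    have lv: "lab t i = 0 \<or> lab t i = 1" for t by (auto simp: lab_def label_def)
    have labe: "lab t i = label (P t) j" for t by (simp add: lab_def i)
    show "\<bar>f z j - z j\<bar> \<le> \<eta>"
    proof (cases "lab r i = 0")
      case True
      then have "lab s i = 1" using rs lv by metis
      then have A: "P r j \<le> f (P r) j" "f (P s) j \<le> P s j" using True l0 l1 sC labe by auto
      show ?thesis using A fr fs cr cs pe by linarith
    next
      case False
      then have "lab r i = 1" "lab s i = 0" using rs lv by metis+
      then have A: "P s j \<le> f (P s) j" "f (P r) j \<le> P r j" using l0 l1 rC labe by auto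
      show ?thesis using A fr fs cr cs pe by linarith
    qed
  qed
  then show ?thesis using zC by blast
qed

lemma brouwer_cube_fin:
  fixes f :: "('c \<Rightarrow> real) \<Rightarrow> ('c \<Rightarrow> real)"
  assumes I: "finite I" and cf: "continuous_on (cube I) f" and fC: "\<And>z. z \<in> cube I \<Longrightarrow> f z \<in> cube I"
  shows "\<exists>z\<in>cube I. f z = z"
proof -
  define D where "D \<eta> = cube I \<inter> (\<Inter>j\<in>I. cube I \<inter> (\<lambda>z. \<bar>f z j - z j\<bar>) -` {..\<eta>})" for \<eta> :: real
  have cfj: "continuous_on (cube I) (\<lambda>z. f z j)" for j
    using cf by (rule continuous_on_product_then_coordinatewise)
  have "\<exists>z. \<forall>\<eta>>0. z \<in> D \<eta>"
  proof (rule fip_nested[OF compact_cube])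
    fix \<eta> :: real assume e: "\<eta> > 0"
    have c2: "closed (cube I \<inter> (\<lambda>z. \<bar>f z j - z j\<bar>) -` {..\<eta>})" for j
      by (rule continuous_closed_preimage[OF _ closed_cube closed_atMost])
        (intro continuous_intros cfj continuous_on_compose2[OF continuous_on_product_coordinates]; auto)
    show "closed (D \<eta>)" unfolding D_def by (intro closed_Int closed_cube closed_INT ballI c2)
    show "D \<eta> \<subseteq> cube I" unfolding D_def by auto
    show "D \<eta> \<noteq> {}" using cube_approx_fix[OF I cf fC e] unfolding D_def by auto
  next
    fix d d' :: real assume "0 < d" "d \<le> d'"
    then show "D d \<subseteq> D d'" unfolding D_def by auto
  qed
  then obtain z where z: "\<And>\<eta>. \<eta> > 0 \<Longrightarrow> z \<in> D \<eta>" by blast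
  have zC: "z \<in> cube I" using z[of 1] by (auto simp: D_def)
  have "f z j = z j" for j
  proof (cases "j \<in> I")
    case True
    show ?thesis
    proof (rule ccontr)
      assume "f z j \<noteq> z j"
      then have "\<bar>f z j - z j\<bar> > 0" by auto
      from z[OF half_gt_zero[OF this]] True have "\<bar>f z j - z j\<bar> \<le> \<bar>f z j - z j\<bar> / 2" unfolding D_def by blast
      with \<open>\<bar>f z j - z j\<bar> > 0\<close> show False by (smt (verit) field_sum_of_halves)
    qed
  next
    case False
    then show ?thesis using zC fC[OF zC] by (auto simp: cube_iff)
  qed
  then show ?thesis using zC by blast
qed

lemma nash_fix_arg:
  fixes T :: "'g set" and l u :: "'g \<Rightarrow> real"
  assumes T: "finite T" and l0: "\<And>g. g \<in> T \<Longrightarrow> 0 \<le> l g" and l1: "sum l T = 1"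
    and fx: "\<And>g. g \<in> T \<Longrightarrow> l g = (l g + max 0 (u g - (\<Sum>h\<in>T. l h * u h))) /
                 (1 + (\<Sum>h\<in>T. max 0 (u h - (\<Sum>h\<in>T. l h * u h))))"
  shows "\<forall>g\<in>T. l g > 0 \<longrightarrow> (\<forall>h\<in>T. u h \<le> u g)"
proof -
  define avg where "avg = (\<Sum>h\<in>T. l h * u h)"
  define gain where "gain g = max 0 (u g - avg)" for g
  define S where "S = (\<Sum>h\<in>T. gain h)"
  have S0: "S \<ge> 0" unfolding S_def gain_def by (intro sum_nonneg) auto
  have fx': "\<And>g. g \<in> T \<Longrightarrow> l g * (1 + S) = l g + gain g"
    using fx S0 unfolding avg_def[symmetric] gain_def[symmetric] S_def[symmetric]
    by (metis add_nonneg_nonneg nonzero_eq_divide_eq not_one_le_zero order_refl zero_le_one add_le_same_cancel1 le_add_same_cancel1)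
  have sum0: "(\<Sum>g\<in>T. l g * (u g - avg)) = 0"
    using l1 by (simp add: algebra_simps sum_subtractf sum_distrib_right[symmetric] avg_def)
  obtain g0 where g0: "g0 \<in> T" "l g0 > 0" "u g0 \<le> avg"
  proof (rule ccontr)
    assume "\<not> thesis"
    then have H: "\<And>g. g \<in> T \<Longrightarrow> l g > 0 \<Longrightarrow> u g > avg" using that by fastforce
    have nn: "\<And>g. g \<in> T \<Longrightarrow> 0 \<le> l g * (u g - avg)"
      using H l0 by (metis less_eq_real_def mult_nonneg_nonneg diff_ge_0_iff_ge mult_zero_left)
    have "\<exists>g\<in>T. l g > 0"
    proof (rule ccontr)
      assume "\<not> (\<exists>g\<in>T. l g > 0)"
      then have "\<forall>g\<in>T. l g = 0" using l0 by force
      then show False using l1 by simp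
    qed
    then obtain g where g: "g \<in> T" "l g > 0" by blast
    have "0 < l g * (u g - avg)" using H[OF g] g by simp
    also have "\<dots> \<le> (\<Sum>g\<in>T. l g * (u g - avg))"
      by (rule member_le_sum[OF g(1)]) (use nn T in auto)
    finally show False using sum0 by simp
  qed
  have "gain g0 = 0" using g0 by (simp add: gain_def)
  then have "l g0 * S = 0" using fx'[OF g0(1)] by (simp add: algebra_simps)
  then have "S = 0" using g0 by simp
  then have gz: "\<forall>g\<in>T. gain g = 0"
    using T unfolding S_def by (subst (asm) sum_nonneg_eq_0_iff) (auto simp: gain_def)
  then have le: "\<And>h. h \<in> T \<Longrightarrow> u h \<le> avg" by (auto simp: gain_def max_def split: if_splits)
  have "(\<Sum>g\<in>T. l g * (avg - u g)) = 0"
    using sum0 by (simp add: algebra_simps sum_subtractf sum_negf[symmetric] right_diff_distrib)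
  then have "\<forall>g\<in>T. l g * (avg - u g) = 0"
    using T l0 le by (subst (asm) sum_nonneg_eq_0_iff) auto
  then show ?thesis using le by (metis diff_gt_0_iff_gt mult_eq_0_iff order_less_irrefl order_le_less)
qed

lemma test_game_eq:
  fixes T :: "'n::finite \<Rightarrow> 'g set" and u :: "'n \<Rightarrow> ('n \<Rightarrow> 'g \<Rightarrow> real) \<Rightarrow> 'g \<Rightarrow> real"
  assumes Tf: "\<And>i. finite (T i)" and Tne: "\<And>i. T i \<noteq> {}"
    and cont: "\<And>i g. continuous_on {l. \<forall>i. l i \<in> bb_simplex (T i)} (\<lambda>l. u i l g)"
  shows "\<exists>l. (\<forall>i. l i \<in> bb_simplex (T i)) \<and> (\<forall>i. \<forall>g\<in>T i. l i g > 0 \<longrightarrow> (\<forall>h\<in>T i. u i l h \<le> u i l g))"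
proof -
  define L where "L = {l. \<forall>i. l i \<in> bb_simplex (T i)}"
  define I where "I = Sigma UNIV T"
  have If: "finite I" unfolding I_def using Tf by (intro finite_SigmaI) auto
  define s where "s z i = (\<Sum>h\<in>T i. z (i, h))" for z :: "'n \<times> 'g \<Rightarrow> real" and i
  define R where "R z = (\<lambda>i g. if g \<in> T i then (z (i,g) + max 0 (1 - s z i) / real (card (T i))) / max 1 (s z i) else 0)" for z
  have cardpos: "real (card (T i)) > 0" for i using Tf Tne by (simp add: card_gt_0_iff)
  have RL: "R z \<in> L" if z: "z \<in> cube I" for z
  proof -
    have "R z i \<in> bb_simplex (T i)" for i
    proof -
      have zn: "g \<in> T i \<Longrightarrow> 0 \<le> z (i, g)" for g using z by (auto simp: cube_iff I_def)
      have nn: "0 \<le> R z i g" for g using zn by (auto simp: R_def)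
      have "sum (R z i) (T i) = (\<Sum>g\<in>T i. (z (i,g) + max 0 (1 - s z i) / real (card (T i))) / max 1 (s z i))"
        by (rule sum.cong) (auto simp: R_def)
      also have "\<dots> = (s z i + max 0 (1 - s z i)) / max 1 (s z i)"
        using cardpos[of i] by (simp add: sum_divide_distrib[symmetric] sum.distrib s_def)
      also have "\<dots> = 1" by (auto simp: max_def)
      finally show ?thesis using nn by (auto simp: bb_simplex_def R_def)
    qed
    then show ?thesis by (auto simp: L_def)
  qed
  have contR: "continuous_on UNIV R"
    unfolding R_def s_def
    apply (intro continuous_on_coordinatewise_then_product)
    subgoal for i g
    proof (cases "g \<in> T i")
      case True
      have cc: "continuous_on UNIV (\<lambda>z::'n\<times>'g\<Rightarrow>real. z p)" for p by (rule continuous_on_product_coordinates)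
      have "continuous_on UNIV (\<lambda>z::'n\<times>'g\<Rightarrow>real. (z (i, g) + max 0 (1 - (\<Sum>h\<in>T i. z (i, h))) / real (card (T i))) / max 1 (\<Sum>h\<in>T i. z (i, h)))"
        by (intro continuous_on_divide continuous_on_add continuous_on_max continuous_on_const continuous_on_diff continuous_on_sum cc) (use Tf Tne in \<open>auto simp: card_gt_0_iff\<close>)
      then show ?thesis using True by simp
    qed simp
    done
  define G where "G z i g = u i (R z) g" for z i g
  have contG: "continuous_on (cube I) (\<lambda>z. G z i g)" for i g
    unfolding G_def
    by (rule continuous_on_compose2[OF cont[of i g, folded L_def] continuous_on_subset[OF contR]]) (auto simp: RL)
  define avg where "avg z i = (\<Sum>h\<in>T i. R z i h * G z i h)" for z i
  define gain where "gain z i g = max 0 (G z i g - avg z i)" for z i g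
  define N where "N z = (\<lambda>p. if snd p \<in> T (fst p) then (R z (fst p) (snd p) + gain z (fst p) (snd p)) / (1 + (\<Sum>h\<in>T (fst p). gain z (fst p) h)) else 0)" for z
  have contRij: "continuous_on (cube I) (\<lambda>z. R z i g)" for i g
    by (rule continuous_on_subset[OF continuous_on_product_then_coordinatewise[OF continuous_on_product_then_coordinatewise[OF contR]]]) auto
  have gain_nn: "0 \<le> gain z i g" for z i g by (simp add: gain_def)
  have npos: "1 + (\<Sum>h\<in>T i. max 0 (F h)) \<noteq> (0::real)" for i and F :: "'g \<Rightarrow> real"
  proof -
    have "0 \<le> (\<Sum>h\<in>T i. max 0 (F h))" by (intro sum_nonneg) auto
    then show ?thesis by linarith
  qed
  have contN: "continuous_on (cube I) N"
    unfolding N_def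
    apply (intro continuous_on_coordinatewise_then_product)
    subgoal for p
      by (cases "snd p \<in> T (fst p)")
        (auto simp: gain_def avg_def npos intro!: continuous_intros contRij contG)
    done
  have NC: "N z \<in> cube I" if z: "z \<in> cube I" for z
  proof -
    have "0 \<le> N z p \<and> N z p \<le> 1" if p: "p \<in> I" for p
    proof -
      obtain i g where pig: "p = (i, g)" "g \<in> T i" using p by (auto simp: I_def)
      have Rs: "R z i \<in> bb_simplex (T i)" using RL[OF z] by (auto simp: L_def)
      have R1: "R z i g \<le> 1"
      proof -
        have "R z i g \<le> sum (R z i) (T i)"
          by (rule member_le_sum) (use Rs pig Tf in \<open>auto simp: bb_simplex_def\<close>)
        then show ?thesis using Rs by (simp add: bb_simplex_def)
      qed
      have g1: "gain z i g \<le> (\<Sum>h\<in>T i. gain z i h)"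
        by (rule member_le_sum) (use pig Tf gain_nn in auto)
      have S0: "0 \<le> (\<Sum>h\<in>T i. gain z i h)" by (intro sum_nonneg gain_nn)
      have Rn: "0 \<le> R z i g" using Rs by (auto simp: bb_simplex_def)
      show ?thesis using pig R1 g1 S0 Rn gain_nn[of z i g] by (auto simp: N_def divide_le_eq_1)
    qed
    moreover have "N z p = 0" if "p \<notin> I" for p using that by (cases p) (auto simp: N_def I_def)
    ultimately show ?thesis by (auto simp: cube_iff)
  qed
  obtain z where zC: "z \<in> cube I" and zfix: "N z = z" using brouwer_cube_fin[OF If contN NC] by blast
  define l where "l = R z"
  have lL: "l \<in> L" using RL[OF zC] by (simp add: l_def)
  have main: "\<forall>g\<in>T i. l i g > 0 \<longrightarrow> (\<forall>h\<in>T i. u i l h \<le> u i l g)" for i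
  proof -
    have Rs: "R z i \<in> bb_simplex (T i)" using RL[OF zC] by (auto simp: L_def)
    have S0: "0 \<le> (\<Sum>h\<in>T i. gain z i h)" by (intro sum_nonneg gain_nn)
    have "s z i = (\<Sum>g\<in>T i. N z (i, g))" using zfix by (simp add: s_def)
    also have "\<dots> = (\<Sum>g\<in>T i. (R z i g + gain z i g) / (1 + (\<Sum>h\<in>T i. gain z i h)))"
      by (rule sum.cong) (auto simp: N_def)
    also have "\<dots> = (sum (R z i) (T i) + (\<Sum>h\<in>T i. gain z i h)) / (1 + (\<Sum>h\<in>T i. gain z i h))"
      by (simp add: sum_divide_distrib[symmetric] sum.distrib)
    also have "\<dots> = 1" using Rs S0 by (simp add: bb_simplex_def)
    finally have s1: "s z i = 1" .
    have lz: "g \<in> T i \<Longrightarrow> l i g = z (i, g)" for g by (simp add: l_def R_def s1)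
    have fx: "l i g = (l i g + max 0 (u i l g - (\<Sum>h\<in>T i. l i h * u i l h))) /
                 (1 + (\<Sum>h\<in>T i. max 0 (u i l h - (\<Sum>h\<in>T i. l i h * u i l h))))" if g: "g \<in> T i" for g
    proof -
      have "l i g = N z (i, g)" using zfix lz[OF g] by simp
      also have "\<dots> = (l i g + max 0 (u i l g - (\<Sum>h\<in>T i. l i h * u i l h))) /
                 (1 + (\<Sum>h\<in>T i. max 0 (u i l h - (\<Sum>h\<in>T i. l i h * u i l h))))"
        using g by (simp add: N_def gain_def avg_def G_def l_def)
      finally show ?thesis .
    qed
    show ?thesis
      by (rule nash_fix_arg[OF Tf _ _ fx]) (use lL in \<open>auto simp: L_def bb_simplex_def\<close>)
  qed
  show ?thesis using lL main by (auto simp: L_def)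
qed

definition fscale :: "real \<Rightarrow> ('c \<Rightarrow> real) \<Rightarrow> 'c \<Rightarrow> real" where "fscale r f = (\<lambda>x. r * f x)"

interpretation fv: vector_space "fscale :: real \<Rightarrow> ('c \<Rightarrow> real) \<Rightarrow> 'c \<Rightarrow> real"
  by unfold_locales (auto simp: fscale_def fun_eq_iff algebra_simps)

lemma sum_fun_eval: "(sum F P) x = (\<Sum>p\<in>P. F p x)" for F :: "'b \<Rightarrow> 'c \<Rightarrow> real"
  by (induction P rule: infinite_finite_induct) (auto simp: func_plus func_zero)

definition oext :: "('a \<Rightarrow> real) \<Rightarrow> 'a option \<Rightarrow> real" where
  "oext p = (\<lambda>ov. case ov of None \<Rightarrow> 1 | Some a \<Rightarrow> p a)"

definition delta :: "'c \<Rightarrow> 'c \<Rightarrow> real" where "delta ov = (\<lambda>ow. if ow = ov then 1 else 0)"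

lemma span_supported:
  assumes S: "finite S" and f: "\<And>ov. ov \<notin> S \<Longrightarrow> f ov = 0"
  shows "f \<in> fv.span (delta ` S)"
proof -
  have "f = (\<Sum>ov\<in>S. fscale (f ov) (delta ov))"
  proof
    fix x
    show "f x = (\<Sum>ov\<in>S. fscale (f ov) (delta ov)) x"
    proof -
      have e: "\<And>p. f p * (if x = p then 1 else 0) = (if p = x then f x else 0)" by auto
      show ?thesis unfolding sum_fun_eval using S f by (cases "x \<in> S") (simp_all add: fscale_def delta_def e)
    qed
  qed
  also have "\<dots> \<in> fv.span (delta ` S)"
    by (intro fv.span_sum fv.span_scale fv.span_base) auto
  finally show ?thesis .
qed

lemma affine_dependent_fin:
  fixes P :: "('a \<Rightarrow> real) set"
  assumes A: "finite A" and P: "finite P" and supp: "\<And>p a. p \<in> P \<Longrightarrow> a \<notin> A \<Longrightarrow> p a = 0"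
    and card: "card P > card A + 1"
  shows "\<exists>c. (\<exists>p\<in>P. c p \<noteq> 0) \<and> sum c P = 0 \<and> (\<forall>a. (\<Sum>p\<in>P. c p * p a) = 0)"
proof -
  define S where "S = insert None (Some ` A)"
  have Sf: "finite S" using A by (simp add: S_def)
  have cS: "card S = card A + 1" using A by (simp add: S_def card_image)
  have inj: "inj_on oext P"
  proof (rule inj_onI)
    fix p q assume "oext p = oext q"
    then have "oext p (Some a) = oext q (Some a)" for a by simp
    then show "p = q" by (auto simp: oext_def fun_eq_iff)
  qed
  define E where "E = oext ` P"
  have cE: "card E = card P" using inj by (simp add: E_def card_image)
  have Esp: "E \<subseteq> fv.span (delta ` S)"
  proof
    fix v assume "v \<in> E"
    then obtain p where p: "p \<in> P" "v = oext p" by (auto simp: E_def)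
    have "v ov = 0" if "ov \<notin> S" for ov
      using that supp[OF p(1)] p(2) by (cases ov) (auto simp: S_def oext_def)
    then show "v \<in> fv.span (delta ` S)" by (rule span_supported[OF Sf])
  qed
  have "fv.dependent E"
  proof (rule ccontr)
    assume "\<not> fv.dependent E"
    then have ind: "fv.independent E" by simp
    have "card E \<le> card (delta ` S)" using fv.independent_span_bound[OF _ ind Esp] Sf by auto
    also have "\<dots> \<le> card S" by (rule card_image_le[OF Sf])
    finally show False using cE cS card by simp
  qed
  then obtain u where u: "\<exists>v\<in>E. u v \<noteq> 0" "(\<Sum>v\<in>E. fscale (u v) v) = 0"
    using fv.dependent_finite[of E] P by (auto simp: E_def)
  define c where "c p = u (oext p)" for p
  have s0: "(\<Sum>p\<in>P. fscale (c p) (oext p)) = 0"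
    using u(2) unfolding E_def c_def by (simp add: sum.reindex[OF inj])
  have ev: "(\<Sum>p\<in>P. c p * oext p ov) = 0" for ov
    using fun_cong[OF s0, of ov] by (simp add: sum_fun_eval fscale_def func_zero)
  have "\<exists>p\<in>P. c p \<noteq> 0" using u(1) by (auto simp: E_def c_def)
  moreover have "sum c P = 0" using ev[of None] by (simp add: oext_def)
  moreover have "(\<Sum>p\<in>P. c p * p a) = 0" for a using ev[of "Some a"] by (simp add: oext_def)
  ultimately show ?thesis by blast
qed

lemma caratheodory_fin:
  fixes P :: "('a \<Rightarrow> real) set" and w :: "('a \<Rightarrow> real) \<Rightarrow> real"
  assumes A: "finite A" and P: "finite P" and supp: "\<And>p a. p \<in> P \<Longrightarrow> a \<notin> A \<Longrightarrow> p a = 0"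
    and w0: "\<And>p. p \<in> P \<Longrightarrow> 0 \<le> w p" and w1: "sum w P = 1"
  shows "\<exists>Q w'. Q \<subseteq> P \<and> card Q \<le> card A + 1 \<and> (\<forall>q\<in>Q. 0 \<le> w' q) \<and> sum w' Q = 1 \<and>
           (\<forall>a. (\<Sum>q\<in>Q. w' q * q a) = (\<Sum>p\<in>P. w p * p a))"
  using P supp w0 w1
proof (induction "card P" arbitrary: P w rule: less_induct)
  case less
  show ?case
  proof (cases "card P \<le> card A + 1")
    case True
    then show ?thesis using less.prems by blast
  next
    case False
    obtain c where c: "\<exists>p\<in>P. c p \<noteq> 0" "sum c P = 0" "\<And>a. (\<Sum>p\<in>P. c p * p a) = 0"
      using affine_dependent_fin[OF A less.prems(1)] less.prems(2) False by force
    have "\<exists>p\<in>P. c p > 0"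
    proof (rule ccontr)
      assume "\<not> (\<exists>p\<in>P. c p > 0)"
      then have nc: "\<forall>p\<in>P. c p \<le> 0" by auto
      have "(\<Sum>p\<in>P. - c p) = 0" using c(2) by (simp add: sum_negf)
      then have "\<forall>p\<in>P. - c p = 0" using nc less.prems(1) by (subst (asm) sum_nonneg_eq_0_iff) auto
      then have "\<forall>p\<in>P. c p = 0" by simp
      then show False using c(1) by auto
    qed
    define Pp where "Pp = {p\<in>P. c p > 0}"
    have Ppf: "finite Pp" "Pp \<noteq> {}" using less.prems(1) \<open>\<exists>p\<in>P. c p > 0\<close> by (auto simp: Pp_def)
    define t where "t = Min ((\<lambda>p. w p / c p) ` Pp)"
    have "t \<in> (\<lambda>p. w p / c p) ` Pp" unfolding t_def using Ppf by (intro Min_in) auto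
    then obtain p0 where p0: "p0 \<in> Pp" "t = w p0 / c p0" by blast
    have tle: "\<And>p. p \<in> Pp \<Longrightarrow> t \<le> w p / c p" using Ppf by (auto simp: t_def)
    have t0: "t \<ge> 0" using p0 less.prems(3) by (auto simp: Pp_def)
    define w2 where "w2 p = w p - t * c p" for p
    have w2nn: "0 \<le> w2 p" if p: "p \<in> P" for p
    proof (cases "c p > 0")
      case True
      then have "t \<le> w p / c p" using tle p by (auto simp: Pp_def)
      then show ?thesis using True by (simp add: w2_def field_simps)
    next
      case False
      then show ?thesis using t0 less.prems(3)[OF p] by (simp add: w2_def) (smt (verit) mult_nonneg_nonpos)
    qed
    have w2p0: "w2 p0 = 0" using p0 by (auto simp: w2_def Pp_def)
    have p0P: "p0 \<in> P" using p0 by (auto simp: Pp_def)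
    define P' where "P' = P - {p0}"
    have sw2: "sum w2 P' = 1"
    proof -
      have "sum w2 P = sum w P - t * sum c P" by (simp add: w2_def sum_subtractf sum_distrib_left)
      then have "sum w2 P = 1" using c(2) less.prems(4) by simp
      then show ?thesis using sum.remove[OF less.prems(1) p0P, of w2] w2p0 by (simp add: P'_def)
    qed
    have mv: "(\<Sum>p\<in>P'. w2 p * p a) = (\<Sum>p\<in>P. w p * p a)" for a
    proof -
      have "(\<Sum>p\<in>P. w2 p * p a) = (\<Sum>p\<in>P. w p * p a) - t * (\<Sum>p\<in>P. c p * p a)"
        by (simp add: w2_def sum_subtractf sum_distrib_left algebra_simps)
      then have "(\<Sum>p\<in>P. w2 p * p a) = (\<Sum>p\<in>P. w p * p a)" using c(3) by simp
      then show ?thesis using sum.remove[OF less.prems(1) p0P, of "\<lambda>p. w2 p * p a"] w2p0 by (simp add: P'_def)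
    qed
    have "card P' < card P" using less.prems(1) p0P unfolding P'_def by (rule card_Diff1_less)
    from less.hyps[OF this, of w2] obtain Q w' where Q: "Q \<subseteq> P'" "card Q \<le> card A + 1" "\<forall>q\<in>Q. 0 \<le> w' q" "sum w' Q = 1"
      "\<forall>a. (\<Sum>q\<in>Q. w' q * q a) = (\<Sum>p\<in>P'. w2 p * p a)"
      using less.prems sw2 w2nn by (auto simp: P'_def)
    show ?thesis using Q mv by (intro exI[of _ Q] exI[of _ w']) (auto simp: P'_def)
  qed
qed

lemma joint_prob_prod:
  fixes i :: "'n::finite"
  shows "joint_prob i b \<sigma> k = (\<Prod>j\<in>UNIV. (if j = i then b else \<sigma> j) (k j))"
proof -
  have "(\<Prod>j\<in>UNIV. (if j = i then b else \<sigma> j) (k j)) = b (k i) * (\<Prod>j\<in>UNIV - {i}. (if j = i then b else \<sigma> j) (k j))"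
    using prod.remove[of UNIV i "\<lambda>j. (if j = i then b else \<sigma> j) (k j)"] by simp
  also have "(\<Prod>j\<in>UNIV - {i}. (if j = i then b else \<sigma> j) (k j)) = (\<Prod>j\<in>UNIV - {i}. \<sigma> j (k j))"
    by (rule prod.cong) auto
  finally show ?thesis by (simp add: joint_prob_def)
qed

lemma joint_prob_nn:
  assumes "b \<in> bb_simplex (A i)" "\<And>j. \<sigma> j \<in> bb_simplex (A j)"
  shows "0 \<le> joint_prob i b \<sigma> k"
  using assms unfolding joint_prob_def bb_simplex_def by (auto intro!: mult_nonneg_nonneg prod_nonneg)

lemma joint_prob_sum:
  fixes A :: "'n::finite \<Rightarrow> 'a set"
  assumes fin: "\<And>j. finite (A j)" and b: "b \<in> bb_simplex (A i)" and s: "\<And>j. \<sigma> j \<in> bb_simplex (A j)"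
  shows "(\<Sum>k\<in>PiE UNIV A. joint_prob i b \<sigma> k) = 1"
proof -
  have "(\<Sum>k\<in>PiE UNIV A. joint_prob i b \<sigma> k) = (\<Sum>k\<in>PiE UNIV A. \<Prod>j\<in>UNIV. (if j = i then b else \<sigma> j) (k j))"
    by (simp add: joint_prob_prod)
  also have "\<dots> = (\<Prod>j\<in>UNIV. \<Sum>a\<in>A j. (if j = i then b else \<sigma> j) a)"
    by (rule prod_sum_PiE[symmetric]) (auto simp: fin)
  also have "\<dots> = 1" using b s by (intro prod.neutral) (auto simp: bb_simplex_def)
  finally show ?thesis .
qed

lemma lott_prob_bounds:
  fixes A :: "'n::finite \<Rightarrow> 'a set"
  assumes fin: "\<And>j. finite (A j)" and b: "b \<in> bb_simplex (A i)" and s: "\<And>j. \<sigma> j \<in> bb_simplex (A j)"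
  shows "lott_prob (PiE UNIV A) (joint_prob i b \<sigma>) P \<in> {0..1}"
proof -
  have fI: "finite (PiE UNIV A)" using fin by (intro finite_PiE) auto
  have nn: "0 \<le> joint_prob i b \<sigma> k" for k using b s by (rule joint_prob_nn)
  have "lott_prob (PiE UNIV A) (joint_prob i b \<sigma>) P \<le> (\<Sum>k\<in>PiE UNIV A. joint_prob i b \<sigma> k)"
    unfolding lott_prob_def by (rule sum_mono2[OF fI]) (auto simp: nn)
  moreover have "(\<Sum>k\<in>PiE UNIV A. joint_prob i b \<sigma> k) = 1" using fin b s by (rule joint_prob_sum)
  ultimately show ?thesis using nn unfolding lott_prob_def
    by (auto intro: sum_nonneg)
qed

lemma val_cont:
  fixes A :: "'n::finite \<Rightarrow> 'a set" and pay :: "'n \<Rightarrow> ('n \<Rightarrow> 'a) \<Rightarrow> real"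
    and Sg :: "'x::topological_space \<Rightarrow> 'n \<Rightarrow> 'a \<Rightarrow> real" and Bf :: "'x \<Rightarrow> 'a \<Rightarrow> real"
  assumes fin: "\<And>j. finite (A j)" and prefs: "cpt_prefs (r i) (v i) (wp i) (wm i)"
    and cS: "continuous_on X Sg" and cB: "continuous_on X Bf"
    and inS: "\<And>x j. x \<in> X \<Longrightarrow> Sg x j \<in> bb_simplex (A j)" and inB: "\<And>x. x \<in> X \<Longrightarrow> Bf x \<in> bb_simplex (A i)"
  shows "continuous_on X (\<lambda>x. bb_value A pay r v wp wm i (Sg x) (Bf x))"
proof -
  define I where "I = PiE UNIV A"
  have cBa: "continuous_on X (\<lambda>x. Bf x a)" for a by (rule continuous_on_product_then_coordinatewise[OF cB])
  have cSa: "continuous_on X (\<lambda>x. Sg x j a)" for j a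
    by (rule continuous_on_product_then_coordinatewise[OF continuous_on_product_then_coordinatewise[OF cS]])
  have cp: "continuous_on X (\<lambda>x. joint_prob i (Bf x) (Sg x) k)" for k
    unfolding joint_prob_def by (intro continuous_intros cBa cSa)
  have cL: "continuous_on X (\<lambda>x. lott_prob I (joint_prob i (Bf x) (Sg x)) P)" for P
    unfolding lott_prob_def by (intro continuous_intros cp)
  have bnd: "x \<in> X \<Longrightarrow> lott_prob I (joint_prob i (Bf x) (Sg x)) P \<in> {0..1}" for x P
    unfolding I_def by (rule lott_prob_bounds) (use fin inB inS in auto)
  have cwp: "continuous_on {0..1} (wp i)" and cwm: "continuous_on {0..1} (wm i)"
    using prefs by (auto simp: cpt_prefs_def)
  have c1: "continuous_on X (\<lambda>x. wp i (lott_prob I (joint_prob i (Bf x) (Sg x)) P))" for P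
    by (rule continuous_on_compose2[OF cwp cL]) (use bnd in auto)
  have c2: "continuous_on X (\<lambda>x. wm i (lott_prob I (joint_prob i (Bf x) (Sg x)) P))" for P
    by (rule continuous_on_compose2[OF cwm cL]) (use bnd in auto)
  show ?thesis
    unfolding bb_value_def cpt_value_def I_def[symmetric]
    by (intro continuous_intros c1 c2)
qed

lemma closed_box_gen:
  assumes "\<And>j. closed (R j)"
  shows "closed {z :: 'c \<Rightarrow> 'b::topological_space. \<forall>j. z j \<in> R j}"
proof -
  have "{z :: 'c \<Rightarrow> 'b. \<forall>j. z j \<in> R j} = (\<Inter>j. (\<lambda>z. z j) -` R j)" by auto
  also have "closed \<dots>"
    by (intro closed_INT ballI closed_vimage assms continuous_on_product_coordinates)
  finally show ?thesis .
qed

lemma compact_box_gen: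
  assumes "\<And>j. compact (R j)"
  shows "compact {z :: 'c \<Rightarrow> 'b::topological_space. \<forall>j. z j \<in> R j}"
proof -
  have "{z :: 'c \<Rightarrow> 'b. \<forall>j. z j \<in> R j} = PiE UNIV R" by (auto simp: PiE_def Pi_def extensional_def)
  moreover have "compactin (product_topology (\<lambda>i. euclidean) UNIV) (PiE UNIV R)"
    using assms by (auto simp: compactin_PiE)
  ultimately show ?thesis by (simp add: euclidean_product_topology)
qed

lemma closed_sum_eq: "closed {b :: 'a \<Rightarrow> real. sum b S = c}"
proof -
  have "continuous_on UNIV (\<lambda>b :: 'a \<Rightarrow> real. \<Sum>a\<in>S. b a)"
    by (intro continuous_on_sum continuous_on_product_coordinates)
  then show ?thesis using closed_Collect_eq[of "\<lambda>b. \<Sum>a\<in>S. b a" "\<lambda>_. c"] by auto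
qed

lemma closed_simplex: "closed (bb_simplex S)"
proof -
  have "bb_simplex S = {b. \<forall>a. b a \<in> (if a \<in> S then {0..} else {0})} \<inter> {b. sum b S = 1}"
    by (auto simp: bb_simplex_def split: if_splits; metis order.refl)
  also have "closed \<dots>" by (intro closed_Int closed_box_gen closed_sum_eq) auto
  finally show ?thesis .
qed

lemma compact_simplex: assumes "finite S" shows "compact (bb_simplex S)"
proof -
  have le1: "b a \<le> 1" if "b \<in> bb_simplex S" "a \<in> S" for b a
  proof -
    have "b a \<le> sum b S" by (rule member_le_sum) (use that assms in \<open>auto simp: bb_simplex_def\<close>)
    then show ?thesis using that by (simp add: bb_simplex_def)
  qed
  have "bb_simplex S = {b. \<forall>a. b a \<in> (if a \<in> S then {0..1} else {0})} \<inter> {b. sum b S = 1}"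
    using le1 by (auto simp: bb_simplex_def split: if_splits; metis order.refl)
  also have "compact \<dots>" by (intro compact_Int_closed compact_box_gen closed_sum_eq) auto
  finally show ?thesis .
qed

lemma mix_in_simplex:
  assumes p: "\<And>k. k \<in> J \<Longrightarrow> p k \<in> bb_simplex A" and w: "w \<in> bb_simplex J"
  shows "(\<lambda>a. \<Sum>k\<in>J. w k * p k a) \<in> bb_simplex A"
proof -
  have "(\<Sum>a\<in>A. \<Sum>k\<in>J. w k * p k a) = (\<Sum>k\<in>J. w k * (\<Sum>a\<in>A. p k a))"
    by (simp add: sum.swap[of _ A] sum_distrib_left)
  also have "\<dots> = (\<Sum>k\<in>J. w k)" using p by (intro sum.cong) (auto simp: bb_simplex_def)
  also have "\<dots> = 1" using w by (simp add: bb_simplex_def)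
  finally show ?thesis using p w
    by (auto simp: bb_simplex_def intro!: sum_nonneg mult_nonneg_nonneg sum.neutral)
qed

lemma finite_pmf_exists:
  fixes w :: "nat \<Rightarrow> real" and \<beta> :: "nat \<Rightarrow> 'b"
  assumes w0: "\<And>k. 0 \<le> w k" and wK: "\<And>k. K \<le> k \<Longrightarrow> w k = 0" and w1: "sum w {..<K} = 1"
  shows "\<exists>\<tau>. set_pmf \<tau> = \<beta> ` {k. w k \<noteq> 0} \<and>
     (\<forall>F :: 'b \<Rightarrow> real. measure_pmf.expectation \<tau> F = (\<Sum>k<K. w k * F (\<beta> k)))"
proof -
  have prob: "(\<integral>\<^sup>+k. ennreal (w k) \<partial>count_space UNIV) = 1"
  proof -
    have "(\<integral>\<^sup>+k. ennreal (w k) \<partial>count_space UNIV) = (\<Sum>k<K. ennreal (w k))"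
      by (rule nn_integral_count_space') (use wK in \<open>auto simp: not_less\<close>)
    also have "\<dots> = ennreal (sum w {..<K})" using w0 by (simp add: sum_ennreal)
    finally show ?thesis using w1 by simp
  qed
  define P where "P = embed_pmf w"
  have pmfP: "pmf P k = w k" for k unfolding P_def using pmf_embed_pmf[OF w0 prob] .
  have setP: "set_pmf P = {k. w k \<noteq> 0}" unfolding P_def using set_embed_pmf[OF w0 prob] .
  define \<tau> where "\<tau> = map_pmf \<beta> P"
  have "set_pmf \<tau> = \<beta> ` {k. w k \<noteq> 0}" by (simp add: \<tau>_def setP)
  moreover have "measure_pmf.expectation \<tau> F = (\<Sum>k<K. w k * F (\<beta> k))" for F :: "'b \<Rightarrow> real"
  proof -
    have "measure_pmf.expectation \<tau> F = measure_pmf.expectation P (\<lambda>k. F (\<beta> k))"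
      by (simp add: \<tau>_def)
    also have "\<dots> = (\<Sum>k\<in>{..<K}. pmf P k *\<^sub>R F (\<beta> k))"
      by (rule integral_measure_pmf) (use setP wK in \<open>auto simp: not_less[symmetric]\<close>)
    finally show ?thesis by (simp add: pmfP)
  qed
  ultimately show ?thesis by blast
qed

lemma finite_test_exists:
  fixes A :: "'n::finite \<Rightarrow> 'a set" and x :: "'n \<Rightarrow> ('n \<Rightarrow> 'a) \<Rightarrow> real"
    and T :: "'n \<Rightarrow> ('a \<Rightarrow> real) set"
  assumes fin: "\<And>i. finite (A i)" and prefs: "\<And>i. cpt_prefs (r i) (v i) (wp i) (wm i)"
    and Tf: "\<And>i. finite (T i)" and Tne: "\<And>i. T i \<noteq> {}" and TS: "\<And>i. T i \<subseteq> bb_simplex (A i)"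
    and K: "\<And>i. card (A i) + 1 \<le> K"
  shows "\<exists>\<beta> l. (\<forall>i k. \<beta> i k \<in> bb_simplex (A i)) \<and> (\<forall>i. l i \<in> bb_simplex {..<K}) \<and>
     (\<forall>i k b'. k < K \<longrightarrow> b' \<in> T i \<longrightarrow>
        l i k * (bb_value A x r v wp wm i (\<lambda>j a. \<Sum>k<K. l j k * \<beta> j k a) b'
                 - bb_value A x r v wp wm i (\<lambda>j a. \<Sum>k<K. l j k * \<beta> j k a) (\<beta> i k)) \<le> 0)"
proof -
  define V where "V i \<sigma> b = bb_value A x r v wp wm i \<sigma> b" for i \<sigma> b
  define s0 where "s0 i = (SOME g. g \<in> T i)" for i
  have s0: "s0 i \<in> T i" for i unfolding s0_def using Tne[of i] by (simp add: some_in_eq)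
  define sT where "sT l j = (\<lambda>a. \<Sum>g\<in>T j. l j g * g a)" for l :: "'n \<Rightarrow> ('a \<Rightarrow> real) \<Rightarrow> real" and j
  define u where "u i l g = V i (sT l) (if g \<in> T i then g else s0 i)" for i l g
  have sTS: "sT l j \<in> bb_simplex (A j)" if "\<forall>i. l i \<in> bb_simplex (T i)" for l j
    unfolding sT_def by (rule mix_in_simplex) (use TS that in auto)
  have csT: "continuous_on UNIV sT"
    unfolding sT_def
    by (intro continuous_on_coordinatewise_then_product continuous_intros
        continuous_on_product_then_coordinatewise[OF continuous_on_product_then_coordinatewise[OF continuous_on_id]])
  have Bin: "(if g \<in> T i then g else s0 i) \<in> bb_simplex (A i)" for g i using s0 TS by auto
  have cu: "continuous_on {l. \<forall>i. l i \<in> bb_simplex (T i)} (\<lambda>l. u i l g)" for i g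
    unfolding u_def V_def
    by (rule val_cont[OF fin prefs continuous_on_subset[OF csT] continuous_on_const])
       (simp_all add: sTS Bin)
  obtain lt where lt: "\<And>i. lt i \<in> bb_simplex (T i)"
    and opt: "\<And>i g h. g \<in> T i \<Longrightarrow> lt i g > 0 \<Longrightarrow> h \<in> T i \<Longrightarrow> u i lt h \<le> u i lt g"
  proof -
    have "\<exists>l. (\<forall>i. l i \<in> bb_simplex (T i)) \<and> (\<forall>i. \<forall>g\<in>T i. l i g > 0 \<longrightarrow> (\<forall>h\<in>T i. u i l h \<le> u i l g))"
      by (rule test_game_eq[of T u]) (use Tf Tne cu in auto)
    then show ?thesis using that by blast
  qed
  define P where "P i = {g\<in>T i. lt i g > 0}" for i
  have PT: "P i \<subseteq> T i" for i by (auto simp: P_def)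
  have lt0: "0 \<le> lt i g" for i g using lt by (auto simp: bb_simplex_def)
  have sumP: "sum (lt i) (P i) = 1" for i
  proof -
    have "sum (lt i) (P i) = sum (lt i) (T i)"
      by (rule sum.mono_neutral_left[OF Tf PT]) (use lt0 in \<open>auto simp: P_def order_le_less\<close>)
    then show ?thesis using lt by (simp add: bb_simplex_def)
  qed
  have mixP: "(\<Sum>p\<in>P i. lt i p * p a) = sT lt i a" for i a
    unfolding sT_def
    by (rule sum.mono_neutral_left[OF Tf PT]) (use lt0 in \<open>auto simp: P_def order_le_less\<close>)
  have "\<forall>i. \<exists>Q w'. Q \<subseteq> P i \<and> card Q \<le> card (A i) + 1 \<and> (\<forall>q\<in>Q. 0 \<le> w' q) \<and> sum w' Q = 1 \<and>
           (\<forall>a. (\<Sum>q\<in>Q. w' q * q a) = (\<Sum>p\<in>P i. lt i p * p a))"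
  proof
    fix i
    show "\<exists>Q w'. Q \<subseteq> P i \<and> card Q \<le> card (A i) + 1 \<and> (\<forall>q\<in>Q. 0 \<le> w' q) \<and> sum w' Q = 1 \<and>
           (\<forall>a. (\<Sum>q\<in>Q. w' q * q a) = (\<Sum>p\<in>P i. lt i p * p a))"
      by (rule caratheodory_fin[OF fin finite_subset[OF PT Tf]])
        (use PT[of i] TS[of i] lt0 sumP in \<open>auto simp: bb_simplex_def\<close>)
  qed
  then obtain Q w' where Q: "\<And>i. Q i \<subseteq> P i" "\<And>i. card (Q i) \<le> card (A i) + 1"
    "\<And>i q. q \<in> Q i \<Longrightarrow> 0 \<le> w' i q" "\<And>i. sum (w' i) (Q i) = 1"
    "\<And>i a. (\<Sum>q\<in>Q i. w' i q * q a) = (\<Sum>p\<in>P i. lt i p * p a)"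
    by metis
  have Qf: "finite (Q i)" for i using Q(1) PT Tf by (meson finite_subset)
  have "\<forall>i. \<exists>e. bij_betw e {..<card (Q i)} (Q i)"
    using ex_bij_betw_nat_finite[OF Qf] by (auto simp: atLeast0LessThan)
  then obtain e where e: "\<And>i. bij_betw (e i) {..<card (Q i)} (Q i)" by metis
  define \<beta> where "\<beta> i k = (if k < card (Q i) then e i k else s0 i)" for i k
  define l where "l i k = (if k < card (Q i) then w' i (e i k) else 0)" for i k
  have eQ: "k < card (Q i) \<Longrightarrow> e i k \<in> Q i" for i k using e[of i] by (auto simp: bij_betw_def)
  have QK: "card (Q i) \<le> K" for i using Q(2)[of i] K[of i] by linarith
  have \<beta>S: "\<beta> i k \<in> bb_simplex (A i)" for i k
    using eQ Q(1) PT TS s0 by (auto simp: \<beta>_def) blast+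
  have sum_l: "(\<Sum>k<K. l i k * f k) = (\<Sum>q\<in>Q i. w' i q * f' q)"
    if "\<And>k. k < card (Q i) \<Longrightarrow> f k = f' (e i k)" for i f f'
  proof -
    have "(\<Sum>k<K. l i k * f k) = (\<Sum>k<card (Q i). l i k * f k)"
      by (rule sum.mono_neutral_right) (use QK in \<open>auto simp: l_def\<close>)
    also have "\<dots> = (\<Sum>k<card (Q i). w' i (e i k) * f' (e i k))"
      by (rule sum.cong) (auto simp: l_def that)
    also have "\<dots> = (\<Sum>q\<in>Q i. w' i q * f' q)"
      by (rule sum.reindex_bij_betw[OF e[of i], of "\<lambda>q. w' i q * f' q"])
    finally show ?thesis .
  qed
  have lS: "l i \<in> bb_simplex {..<K}" for i
  proof -
    have "(\<Sum>k<K. l i k * 1) = (\<Sum>q\<in>Q i. w' i q * 1)" by (rule sum_l) auto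
    then have "sum (l i) {..<K} = 1" using Q(4) by simp
    moreover have "0 \<le> l i k" for k using Q(3) eQ by (auto simp: l_def)
    moreover have "k \<notin> {..<K} \<Longrightarrow> l i k = 0" for k using QK[of i] by (auto simp: l_def)
    ultimately show ?thesis by (auto simp: bb_simplex_def)
  qed
  have sig: "(\<lambda>j a. \<Sum>k<K. l j k * \<beta> j k a) = sT lt"
  proof (intro ext)
    fix j a
    have "(\<Sum>k<K. l j k * \<beta> j k a) = (\<Sum>q\<in>Q j. w' j q * q a)" by (rule sum_l) (auto simp: \<beta>_def)
    also have "\<dots> = sT lt j a" using Q(5) mixP by simp
    finally show "(\<Sum>k<K. l j k * \<beta> j k a) = sT lt j a" .
  qed
  have cond: "l i k * (V i (sT lt) b' - V i (sT lt) (\<beta> i k)) \<le> 0" if "k < K" "b' \<in> T i" for i k b'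
  proof (cases "k < card (Q i)")
    case True
    have g: "\<beta> i k \<in> T i" "lt i (\<beta> i k) > 0" using eQ[OF True] Q(1) by (auto simp: \<beta>_def True P_def)
    have "u i lt b' \<le> u i lt (\<beta> i k)" by (rule opt[OF g that(2)])
    then have "V i (sT lt) b' \<le> V i (sT lt) (\<beta> i k)" using g that by (simp add: u_def)
    moreover have "0 \<le> l i k" using Q(3) eQ True by (auto simp: l_def)
    ultimately show ?thesis by (simp add: mult_nonneg_nonpos)
  next
    case False
    then show ?thesis by (simp add: l_def)
  qed
  show ?thesis
    by (intro exI[of _ \<beta>] exI[of _ l]) (use \<beta>S lS cond in \<open>auto simp: sig V_def\<close>)
qed

theorem corollary1:
  fixes A :: "'n::finite \<Rightarrow> 'a set"
    and x :: "'n \<Rightarrow> ('n \<Rightarrow> 'a) \<Rightarrow> real"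
    and r :: "'n \<Rightarrow> real"
    and v wp wm :: "'n \<Rightarrow> real \<Rightarrow> real"
  assumes "\<And>i. finite (A i)" and "\<And>i. A i \<noteq> {}"
    and "\<And>i. cpt_prefs (r i) (v i) (wp i) (wm i)"
  shows "\<exists>\<tau> :: 'n \<Rightarrow> ('a \<Rightarrow> real) pmf.
           (\<forall>i. finite (set_pmf (\<tau> i))) \<and> mixed_bb_nash A x r v wp wm \<tau>"
proof -
  note fin = assms(1) and ne = assms(2) and prefs = assms(3)
  define V where "V i \<sigma> b = bb_value A x r v wp wm i \<sigma> b" for i \<sigma> b
  define a0 where "a0 i = (SOME a. a \<in> A i)" for i
  have a0: "a0 i \<in> A i" for i unfolding a0_def using ne[of i] by (simp add: some_in_eq)
  define s0 where "s0 i = (\<lambda>a. if a = a0 i then 1 else (0::real))" for i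
  have s0S: "s0 i \<in> bb_simplex (A i)" for i
    using a0[of i] fin[of i] by (auto simp: s0_def bb_simplex_def)
  define K where "K = (\<Sum>i\<in>UNIV. card (A i)) + 1"
  have cardK: "card (A i) + 1 \<le> K" for i
    using member_le_sum[of i UNIV "\<lambda>i. card (A i)"] by (simp add: K_def)
  define sig where "sig y j = (\<lambda>a. \<Sum>k<K. snd y j k * fst y j k a)"
    for y :: "('n \<Rightarrow> nat \<Rightarrow> 'a \<Rightarrow> real) \<times> ('n \<Rightarrow> nat \<Rightarrow> real)" and j
  define X where "X = {\<beta> :: 'n \<Rightarrow> nat \<Rightarrow> 'a \<Rightarrow> real. \<forall>i k. \<beta> i k \<in> bb_simplex (A i)} \<times>
                      {l :: 'n \<Rightarrow> nat \<Rightarrow> real. \<forall>i. l i \<in> bb_simplex {..<K}}"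
  have XB: "{\<beta> :: 'n \<Rightarrow> nat \<Rightarrow> 'a \<Rightarrow> real. \<forall>i k. \<beta> i k \<in> bb_simplex (A i)} =
     {\<beta>. \<forall>i. \<beta> i \<in> {g. \<forall>k. g k \<in> bb_simplex (A i)}}" by auto
  have Xc: "compact X"
    unfolding X_def XB
    by (intro compact_Times compact_box_gen compact_simplex fin) auto
  have Xcl: "closed X"
    unfolding X_def XB
    by (intro closed_Times closed_box_gen closed_simplex)
  have sigS: "sig y j \<in> bb_simplex (A j)" if "y \<in> X" for y j
    unfolding sig_def by (rule mix_in_simplex) (use that in \<open>auto simp: X_def\<close>)
  have cfst: "continuous_on UNIV (\<lambda>y :: ('n \<Rightarrow> nat \<Rightarrow> 'a \<Rightarrow> real) \<times> ('n \<Rightarrow> nat \<Rightarrow> real). fst y i k)" for i k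
    by (rule continuous_on_product_then_coordinatewise[OF continuous_on_product_then_coordinatewise[OF continuous_on_fst[OF continuous_on_id]]])
  have cfsta: "continuous_on UNIV (\<lambda>y :: ('n \<Rightarrow> nat \<Rightarrow> 'a \<Rightarrow> real) \<times> ('n \<Rightarrow> nat \<Rightarrow> real). fst y i k a)" for i k a
    by (rule continuous_on_product_then_coordinatewise[OF continuous_on_product_then_coordinatewise[OF continuous_on_product_then_coordinatewise[OF continuous_on_fst[OF continuous_on_id]]]])
  have csnd: "continuous_on UNIV (\<lambda>y :: ('n \<Rightarrow> nat \<Rightarrow> 'a \<Rightarrow> real) \<times> ('n \<Rightarrow> nat \<Rightarrow> real). snd y i k)" for i k
    by (rule continuous_on_product_then_coordinatewise[OF continuous_on_product_then_coordinatewise[OF continuous_on_snd[OF continuous_on_id]]])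
  have csig: "continuous_on UNIV sig"
    unfolding sig_def
    by (intro continuous_on_coordinatewise_then_product continuous_intros cfsta csnd)
  define Fs where "Fs i b' = X \<inter> (\<Inter>k\<in>{..<K}. X \<inter> (\<lambda>y. snd y i k * (V i (sig y) b' - V i (sig y) (fst y i k))) -` {..0})"
    for i b'
  have Fcl: "closed (Fs i b')" if b': "b' \<in> bb_simplex (A i)" for i b'
  proof -
    have c1: "continuous_on X (\<lambda>y. V i (sig y) b')"
      unfolding V_def
      by (rule val_cont[OF fin prefs continuous_on_subset[OF csig] continuous_on_const]) (use sigS b' in auto)
    have c2: "continuous_on X (\<lambda>y. V i (sig y) (fst y i k))" for k
      unfolding V_def
      by (rule val_cont[OF fin prefs continuous_on_subset[OF csig] continuous_on_subset[OF cfst]])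
        (use sigS in \<open>auto simp: X_def\<close>)
    have "closed (X \<inter> (\<lambda>y. snd y i k * (V i (sig y) b' - V i (sig y) (fst y i k))) -` {..0})" for k
      by (rule continuous_closed_preimage[OF _ Xcl closed_atMost])
        (intro continuous_intros c1 c2 continuous_on_subset[OF csnd] subset_UNIV)
    then show ?thesis unfolding Fs_def by (intro closed_Int Xcl closed_INT) auto
  qed
  define Fam where "Fam = (\<lambda>(i, b'). Fs i b') ` {(i, b'). b' \<in> bb_simplex (A i)}"
  have "X \<inter> \<Inter> Fam \<noteq> {}"
  proof (rule compact_imp_fip[OF Xc])
    show "\<And>T. T \<in> Fam \<Longrightarrow> closed T" using Fcl by (auto simp: Fam_def)
    fix F' assume F': "finite F'" "F' \<subseteq> Fam"
    then obtain Z where Z: "Z \<subseteq> {(i, b'). b' \<in> bb_simplex (A i)}" "finite Z" "F' = (\<lambda>(i, b'). Fs i b') ` Z"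
      unfolding Fam_def by (meson finite_subset_image)
    define T where "T i = insert (s0 i) {b'. (i, b') \<in> Z}" for i
    have Tf: "finite (T i)" for i
    proof -
      have "{b'. (i, b') \<in> Z} \<subseteq> snd ` Z" by force
      then show ?thesis using Z(2) by (auto simp: T_def intro: finite_subset)
    qed
    have TS: "T i \<subseteq> bb_simplex (A i)" for i using Z(1) s0S by (auto simp: T_def)
    have Tne: "T i \<noteq> {}" for i by (simp add: T_def)
    have ex: "\<exists>\<beta> l. (\<forall>i k. \<beta> i k \<in> bb_simplex (A i)) \<and> (\<forall>i. l i \<in> bb_simplex {..<K}) \<and>
     (\<forall>i k b'. k < K \<longrightarrow> b' \<in> T i \<longrightarrow>
        l i k * (bb_value A x r v wp wm i (\<lambda>j a. \<Sum>k<K. l j k * \<beta> j k a) b'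
                 - bb_value A x r v wp wm i (\<lambda>j a. \<Sum>k<K. l j k * \<beta> j k a) (\<beta> i k)) \<le> 0)"
      by (rule finite_test_exists[where A=A and x=x and T=T and K=K and r=r and v=v and wp=wp and wm=wm,
            OF fin prefs Tf Tne TS cardK])
    then obtain \<beta> l where \<beta>S: "\<And>i k. \<beta> i k \<in> bb_simplex (A i)" and lS: "\<And>i. l i \<in> bb_simplex {..<K}"
      and cond: "\<And>i k b'. k < K \<Longrightarrow> b' \<in> T i \<Longrightarrow>
        l i k * (bb_value A x r v wp wm i (\<lambda>j a. \<Sum>k<K. l j k * \<beta> j k a) b'
                 - bb_value A x r v wp wm i (\<lambda>j a. \<Sum>k<K. l j k * \<beta> j k a) (\<beta> i k)) \<le> 0"
      by blast
    define y where "y = (\<beta>, l)"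
    have yX: "y \<in> X" using \<beta>S lS by (auto simp: X_def y_def)
    have sy: "sig (\<beta>, l) = (\<lambda>j a. \<Sum>k<K. l j k * \<beta> j k a)" by (intro ext) (simp add: sig_def)
    have "y \<in> Fs i b'" if "(i, b') \<in> Z" for i b'
    proof -
      have "\<forall>k<K. snd y i k * (V i (sig y) b' - V i (sig y) (fst y i k)) \<le> 0"
        using cond[of _ b' i] that by (simp add: sy V_def y_def T_def)
      then show ?thesis using yX unfolding Fs_def by auto
    qed
    then have "y \<in> \<Inter> F'" using Z(3) by auto
    then show "X \<inter> \<Inter> F' \<noteq> {}" using yX by blast
  qed
  then obtain y where yX: "y \<in> X" and yF: "\<And>i b'. b' \<in> bb_simplex (A i) \<Longrightarrow> y \<in> Fs i b'"
    unfolding Fam_def by blast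
  define \<beta> where "\<beta> = fst y"
  define l where "l = snd y"
  have \<beta>S: "\<beta> i k \<in> bb_simplex (A i)" for i k using yX by (auto simp: X_def \<beta>_def)
  have lS: "l i \<in> bb_simplex {..<K}" for i using yX by (auto simp: X_def l_def)
  have opt: "V i (sig y) b' \<le> V i (sig y) (\<beta> i k)" if "b' \<in> bb_simplex (A i)" "k < K" "l i k \<noteq> 0" for i b' k
  proof -
    have "l i k * (V i (sig y) b' - V i (sig y) (\<beta> i k)) \<le> 0"
      using yF[OF that(1)] that(2) unfolding Fs_def l_def \<beta>_def by blast
    moreover have "l i k > 0" using lS[of i] that(3) by (auto simp: bb_simplex_def order_le_less)
    ultimately show ?thesis by (simp add: mult_le_0_iff)
  qed
  have "\<forall>i. \<exists>\<tau>. set_pmf \<tau> = \<beta> i ` {k. l i k \<noteq> 0} \<and>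
     (\<forall>F :: ('a \<Rightarrow> real) \<Rightarrow> real. measure_pmf.expectation \<tau> F = (\<Sum>k<K. l i k * F (\<beta> i k)))"
  proof
    fix i
    show "\<exists>\<tau>. set_pmf \<tau> = \<beta> i ` {k. l i k \<noteq> 0} \<and>
     (\<forall>F :: ('a \<Rightarrow> real) \<Rightarrow> real. measure_pmf.expectation \<tau> F = (\<Sum>k<K. l i k * F (\<beta> i k)))"
      by (rule finite_pmf_exists) (use lS[of i] in \<open>auto simp: bb_simplex_def\<close>)
  qed
  then obtain \<tau> :: "'n \<Rightarrow> ('a \<Rightarrow> real) pmf" where
    \<tau>set: "\<And>i. set_pmf (\<tau> i) = \<beta> i ` {k. l i k \<noteq> 0}" and
    \<tau>exp: "\<And>i F. measure_pmf.expectation (\<tau> i) F = (\<Sum>k<K. l i k * F (\<beta> i k))"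
    by metis
  have lK: "l i k \<noteq> 0 \<Longrightarrow> k < K" for i k using lS[of i] by (auto simp: bb_simplex_def)
  have ind: "(\<lambda>j. induced_mixed (\<tau> j)) = sig y"
    by (intro ext) (simp add: induced_mixed_def \<tau>exp sig_def \<beta>_def l_def)
  have "finite (set_pmf (\<tau> i))" for i
  proof -
    have "{k. l i k \<noteq> 0} \<subseteq> {..<K}" using lK by auto
    then show ?thesis unfolding \<tau>set by (auto intro: finite_subset)
  qed
  moreover have "mixed_bb_nash A x r v wp wm \<tau>"
    unfolding mixed_bb_nash_def
  proof (intro conjI allI ballI)
    fix i show "set_pmf (\<tau> i) \<subseteq> bb_simplex (A i)" using \<beta>S by (auto simp: \<tau>set)
  next
    fix i b assume b: "b \<in> set_pmf (\<tau> i)"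
    then obtain k where k: "b = \<beta> i k" "l i k \<noteq> 0" by (auto simp: \<tau>set)
    show "bb_best_response A x r v wp wm i (\<lambda>j. induced_mixed (\<tau> j)) b"
      unfolding bb_best_response_def ind
      using \<beta>S opt[OF _ lK[OF k(2)] k(2)] k(1) by (auto simp: V_def)
  qed
  ultimately show ?thesis by blast
qed

end
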